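(* Let $a_x,b_x$ be linearly independent linear forms. (A1) For a linear form $f$: $J[f,a_x,b_x]=0$ iff $f=g_0a_x+h_0b_x$ for some $g_0,h_0\in\mathbb C$. (B1) For a quadratic form $f$: $J[f,a_x,b_x]=0$ iff $f=g_0a_x^2+h_0a_xb_x+k_0b_x^2$ for some constants $g_0,h_0,k_0$. (B2) For a quadratic form $f$: $J^2[f,a_x^2,b_x^2]=0$ iff $f=g_xa_x+h_xb_x$ for some linear forms $g_x,h_x$. (C1) For a cubic form $f$: $J[f,a_x,b_x]=0$ iff $f=g_0a_x^3+h_0a_x^2b_x+k_0a_xb_x^2+i_0b_x^3$ for some constants $g_0,h_0,k_0,i_0$. (C2) For a cubic form $f$: $J^2[f,a_x^2,b_x^2]=0$ iff $f=g_xa_x^2+h_xa_xb_x+k_xb_x^2$ for some linear forms $g_x,h_x,k_x$. (C3) For a cubic form $f$: $J^3[f,a_x^3,b_x^3]=0$ iff $f=g_{xx}a_x+h_{xx}b_x$ for some quadratic forms $g_{xx},h_{xx}$.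
   Context: Forms are homogeneous polynomials with complex coefficients in $x=(x_1,x_2,x_3)$. For $a\in\mathbb C^3$, $a_x=a_1x_1+a_2x_2+a_3x_3$. For forms $f,g,h$ and $n\ge1$, the $n$-th transvectant is $J^n[f,g,h]=\big(\Omega^n(f(x)g(y)h(z))\big)|_{y=z=x}$, where $\Omega$ is the determinant of the operator matrix with rows $(\partial/\partial x_i)$, $(\partial/\partial y_i)$, $(\partial/\partial z_i)$. Equivalently, expand $\det(a,b,c)^n$ and replace each monomial $a^\alpha b^\beta c^\gamma$ by $\partial^\alpha f\,\partial^\beta g\,\partial^\gamma h$. Write $J=J^1$ (the Jacobian determinant). *)

theory Defs
  imports Complex_Main "HOL-Combinatorics.Permutations"
begin

text \<open>A ternary form is represented by its coefficient function:
  f (i,j,k) is the coefficient of x1^i x2^j x3^k.  Coordinates are indexed 0,1,2.\<close>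
type_synonym form = "nat \<times> nat \<times> nat \<Rightarrow> complex"

definition hom :: "nat \<Rightarrow> form \<Rightarrow> bool" where
  "hom d f \<longleftrightarrow> (\<forall>i j k. f (i,j,k) \<noteq> 0 \<longrightarrow> i + j + k = d)"

definition fadd :: "form \<Rightarrow> form \<Rightarrow> form" where
  "fadd f g = (\<lambda>e. f e + g e)"

definition fsmult :: "complex \<Rightarrow> form \<Rightarrow> form" where
  "fsmult c f = (\<lambda>e. c * f e)"

definition fmul :: "form \<Rightarrow> form \<Rightarrow> form" where
  "fmul f g = (\<lambda>(i,j,k). \<Sum>(p,q,r)\<in>{0..i}\<times>{0..j}\<times>{0..k}. f (p,q,r) * g (i-p, j-q, k-r))"

definition lform :: "(nat \<Rightarrow> complex) \<Rightarrow> form" where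
  "lform a = (\<lambda>e. if e = (1,0,0) then a 0 else if e = (0,1,0) then a 1
                 else if e = (0,0,1) then a 2 else 0)"

definition pd :: "nat \<Rightarrow> form \<Rightarrow> form" where
  "pd m f = (\<lambda>(i,j,k).
     if m = 0 then of_nat (i+1) * f (i+1,j,k)
     else if m = 1 then of_nat (j+1) * f (i,j+1,k)
     else of_nat (k+1) * f (i,j,k+1))"

fun dmulti :: "nat list \<Rightarrow> form \<Rightarrow> form" where
  "dmulti [] f = f"
| "dmulti (m # ms) f = pd m (dmulti ms f)"

definition perms3 :: "(nat \<Rightarrow> nat) set" where
  "perms3 = {p. p permutes {0,1,2}}"

text \<open>n-th transvectant: Omega^n (f(x) g(y) h(z)) at y = z = x, where
  Omega = sum over permutations p of sign p * d_{x,p 0} d_{y,p 1} d_{z,p 2}.\<close>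
definition transv :: "nat \<Rightarrow> form \<Rightarrow> form \<Rightarrow> form \<Rightarrow> form" where
  "transv n f g h =
     (\<lambda>e. \<Sum>ps\<in>{ps. length ps = n \<and> set ps \<subseteq> perms3}.
        of_int (\<Prod>p\<leftarrow>ps. sign p) *
        fmul (fmul (dmulti (map (\<lambda>p. p 0) ps) f) (dmulti (map (\<lambda>p. p 1) ps) g))
             (dmulti (map (\<lambda>p. p 2) ps) h) e)"

definition zero_form :: form where "zero_form = (\<lambda>_. 0)"

definition lin_indep2 :: "(nat \<Rightarrow> complex) \<Rightarrow> (nat \<Rightarrow> complex) \<Rightarrow> bool" where
  "lin_indep2 a b \<longleftrightarrow> (\<forall>u v. (\<forall>i<3. u * a i + v * b i = 0) \<longrightarrow> u = 0 \<and> v = 0)"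

end

theory Submission
  imports Defs
begin

definition sh :: "nat \<Rightarrow> form \<Rightarrow> form" where
 "sh m g = (\<lambda>(i,j,k). if m = 0 then (if 0 < i then g (i-1,j,k) else 0)
     else if m = 1 then (if 0 < j then g (i,j-1,k) else 0)
     else (if 0 < k then g (i,j,k-1) else 0))"

abbreviation box :: "nat \<Rightarrow> nat \<Rightarrow> nat \<Rightarrow> (nat\<times>nat\<times>nat) set" where
  "box i j k \<equiv> {0..i}\<times>{0..j}\<times>{0..k}"

lemma fmul_at: "fmul f g (i,j,k) = (\<Sum>(p,q,r)\<in>box i j k. f (p,q,r) * g (i-p, j-q, k-r))"
  by (simp add: fmul_def)

lemma lform_alt: "lform v x = (if x = (1,0,0) then v 0 else 0) + (if x = (0,1,0) then v 1 else 0)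
   + (if x = (0,0,1) then v 2 else 0)"
  by (simp add: lform_def)

lemma c1: "(p::nat) \<le> i \<Longrightarrow> (q::nat) \<le> j \<Longrightarrow> (r::nat) \<le> k \<Longrightarrow> ((i-p,j-q,k-r) = (1,0,0)) = ((p,q,r) = (i-1,j,k) \<and> 0 < i)"
  by (simp only: prod.inject) presburger
lemma c2: "(p::nat) \<le> i \<Longrightarrow> (q::nat) \<le> j \<Longrightarrow> (r::nat) \<le> k \<Longrightarrow> ((i-p,j-q,k-r) = (0,1,0)) = ((p,q,r) = (i,j-1,k) \<and> 0 < j)"
  by (simp only: prod.inject) presburger
lemma c3: "(p::nat) \<le> i \<Longrightarrow> (q::nat) \<le> j \<Longrightarrow> (r::nat) \<le> k \<Longrightarrow> ((i-p,j-q,k-r) = (0,0,1)) = ((p,q,r) = (i,j,k-1) \<and> 0 < k)"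
  by (simp only: prod.inject) presburger

lemma fmul_lform: "fmul g (lform v) = (\<lambda>e. \<Sum>m<3. v m * sh m g e)"
proof (rule ext, clarify)
  fix i j k
  have "fmul g (lform v) (i,j,k) = (\<Sum>x\<in>box i j k.
      (if x = (i-1,j,k) then (if 0<i then v 0 * g x else 0) else 0) +
      (if x = (i,j-1,k) then (if 0<j then v 1 * g x else 0) else 0) +
      (if x = (i,j,k-1) then (if 0<k then v 2 * g x else 0) else 0))"
    unfolding fmul_at
    apply (rule sum.cong, rule refl)
    apply (clarsimp simp only: lform_alt distrib_left mem_Times_iff atLeastAtMost_iff fst_conv snd_conv)
    apply (simp only: c1 c2 c3)
    apply auto
    done
  also have "\<dots> = (\<Sum>m<3. v m * sh m g (i,j,k))"
    by (simp add: sum.distrib sh_def eval_nat_numeral)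
  finally show "fmul g (lform v) (i,j,k) = (\<Sum>m<3. v m * sh m g (i,j,k))" .
qed
lemma fmul_comm: "fmul f g = fmul g f"
proof (rule ext, clarify)
  fix i j k
  show "fmul f g (i,j,k) = fmul g f (i,j,k)"
    unfolding fmul_at
    by (rule sum.reindex_bij_witness[where i="\<lambda>(p,q,r). (i-p,j-q,k-r)" and j="\<lambda>(p,q,r). (i-p,j-q,k-r)"])
       (auto simp: mult.commute)
qed

lemma fmul_sh: "fmul g (sh m h) = sh m (fmul g h)"
proof (rule ext, clarify)
  fix i j k
  consider "m = 0" | "m = 1" | "m \<noteq> 0 \<and> m \<noteq> 1" by blast
  then show "fmul g (sh m h) (i,j,k) = sh m (fmul g h) (i,j,k)"
  proof cases
    case 1
    show ?thesis
    proof (cases "i = 0")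
      case True then show ?thesis using 1 by (simp add: fmul_at sh_def)
    next
      case False
      have "fmul g (sh m h) (i,j,k) = (\<Sum>(p,q,r)\<in>box (i-1) j k. g (p,q,r) * h (i-1-p, j-q, k-r))"
        unfolding fmul_at
        by (rule sum.mono_neutral_cong_right) (use 1 False in \<open>auto simp: sh_def split: if_split_asm\<close>)
      then show ?thesis using 1 False by (simp add: sh_def fmul_at)
    qed
  next
    case 2
    show ?thesis
    proof (cases "j = 0")
      case True then show ?thesis using 2 by (simp add: fmul_at sh_def)
    next
      case False
      have "fmul g (sh m h) (i,j,k) = (\<Sum>(p,q,r)\<in>box i (j-1) k. g (p,q,r) * h (i-p, j-1-q, k-r))"
        unfolding fmul_at
        by (rule sum.mono_neutral_cong_right) (use 2 False in \<open>auto simp: sh_def split: if_split_asm\<close>)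
      then show ?thesis using 2 False by (simp add: sh_def fmul_at)
    qed
  next
    case 3
    show ?thesis
    proof (cases "k = 0")
      case True then show ?thesis using 3 by (simp add: fmul_at sh_def)
    next
      case False
      have "fmul g (sh m h) (i,j,k) = (\<Sum>(p,q,r)\<in>box i j (k-1). g (p,q,r) * h (i-p, j-q, k-1-r))"
        unfolding fmul_at
        by (rule sum.mono_neutral_cong_right) (use 3 False in \<open>auto simp: sh_def split: if_split_asm\<close>)
      then show ?thesis using 3 False by (simp add: sh_def fmul_at)
    qed
  qed
qed

definition kap :: "complex \<Rightarrow> form" where "kap c = (\<lambda>e. if e = (0,0,0) then c else 0)"
definition Dv :: "(nat \<Rightarrow> complex) \<Rightarrow> form \<Rightarrow> form" where "Dv v f = (\<lambda>e. \<Sum>m<3. v m * pd m f e)"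
definition dotp :: "(nat \<Rightarrow> complex) \<Rightarrow> (nat \<Rightarrow> complex) \<Rightarrow> complex" where "dotp v w = (\<Sum>m<3. v m * w m)"

lemma fadd_at[simp]: "fadd f g e = f e + g e" by (simp add: fadd_def)
lemma fsmult_at[simp]: "fsmult c f e = c * f e" by (simp add: fsmult_def)
lemma zero_at[simp]: "zero_form e = 0" by (simp add: zero_form_def)

lemma fmul_at2: "fmul f g (i,j,k) = (\<Sum>x\<in>box i j k. f x * g (i - fst x, j - fst (snd x), k - snd (snd x)))"
  by (simp add: fmul_def split_def)

lemma fmul_fadd_right: "fmul f (fadd g h) = fadd (fmul f g) (fmul f h)"
  by (rule ext, clarify) (simp add: fmul_at2 distrib_left sum.distrib)
lemma fmul_fadd_left: "fmul (fadd g h) f = fadd (fmul g f) (fmul h f)"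
  by (metis fmul_comm fmul_fadd_right)
lemma fmul_fsmult_right: "fmul f (fsmult c g) = fsmult c (fmul f g)"
  by (rule ext, clarify) (simp add: fmul_at2 sum_distrib_left ac_simps)
lemma fmul_fsmult_left: "fmul (fsmult c g) f = fsmult c (fmul g f)"
  by (metis fmul_comm fmul_fsmult_right)
lemma fmul_zero_right: "fmul f zero_form = zero_form"
  by (rule ext, clarify) (simp add: fmul_at2)
lemma fmul_zero_left: "fmul zero_form f = zero_form"
  by (metis fmul_comm fmul_zero_right)

lemma fmul_kap_right: "fmul f (kap c) = fsmult c f"
proof (rule ext, clarify)
  fix i j k
  have "fmul f (kap c) (i,j,k) = (\<Sum>x\<in>box i j k. if x = (i,j,k) then c * f x else 0)"
    unfolding fmul_at2 kap_def
    by (rule sum.cong) (auto simp: prod_eq_iff)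
  also have "\<dots> = c * f (i,j,k)" by simp
  finally show "fmul f (kap c) (i,j,k) = fsmult c f (i,j,k)" by simp
qed
lemma fmul_kap_left: "fmul (kap c) f = fsmult c f"
  by (metis fmul_comm fmul_kap_right)

lemma fmul_sum3: "fmul g (\<lambda>e. \<Sum>m<(3::nat). v m * H m e) = (\<lambda>e. \<Sum>m<3. v m * fmul g (H m) e)"
  by (rule ext, clarify) (simp add: fmul_at2 sum_distrib_left ac_simps, rule sum.swap)

lemma sh_sum3: "sh n (\<lambda>e. \<Sum>m<(3::nat). v m * H m e) = (\<lambda>e. \<Sum>m<3. v m * sh n (H m) e)"
  by (rule ext, clarify) (simp add: sh_def)

lemma assoc_lin: "fmul g (fmul h (lform v)) = fmul (fmul g h) (lform v)"
  by (simp add: fmul_lform fmul_sum3 fmul_sh)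


lemma pd_at: "pd m f (i,j,k) = (if m = 0 then of_nat (i+1) * f (i+1,j,k)
     else if m = 1 then of_nat (j+1) * f (i,j+1,k) else of_nat (k+1) * f (i,j,k+1))"
  by (simp add: pd_def)

lemma pd_fadd: "pd m (fadd f g) = fadd (pd m f) (pd m g)"
  by (rule ext, clarify) (simp add: pd_at distrib_left)
lemma pd_fsmult: "pd m (fsmult c f) = fsmult c (pd m f)"
  by (rule ext, clarify) (simp add: pd_at ac_simps)
lemma pd_zero: "pd m zero_form = zero_form"
  by (rule ext, clarify) (simp add: pd_at)
lemma pd_kap: "pd m (kap c) = zero_form"
  by (rule ext, clarify) (simp add: pd_at kap_def)
lemma pd_lform: "m < 3 \<Longrightarrow> pd m (lform v) = kap (v m)"
  by (rule ext, clarify) (auto simp: pd_at kap_def lform_def eval_nat_numeral less_Suc_eq)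
lemma pd_sum3: "pd n (\<lambda>e. \<Sum>m<(3::nat). v m * H m e) = (\<lambda>e. \<Sum>m<3. v m * pd n (H m) e)"
  by (rule ext, clarify) (simp add: pd_at sum_distrib_left ac_simps)
lemma pd_comm: "pd m (pd n f) = pd n (pd m f)"
  by (rule ext, clarify) (simp add: pd_at ac_simps)

lemma pm1: "0 < (i::nat) \<Longrightarrow> i - 1 + 1 = i" by simp

lemma pd_fmul_lform: "n < 3 \<Longrightarrow> pd n (fmul g (lform v)) = fadd (fmul (pd n g) (lform v)) (fsmult (v n) g)"
proof (rule ext, clarify)
  fix i j k
  assume n: "n < 3"
  show "pd n (fmul g (lform v)) (i,j,k) = fadd (fmul (pd n g) (lform v)) (fsmult (v n) g) (i,j,k)"
    unfolding fmul_lform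
  proof -
    from n have "n = 0 \<or> n = 1 \<or> n = 2" by auto
    then show "pd n (\<lambda>e. \<Sum>m<3. v m * sh m g e) (i, j, k) =
      fadd (\<lambda>e. \<Sum>m<3. v m * sh m (pd n g) e) (fsmult (v n) g) (i, j, k)"
      by (elim disjE; cases "i = 0"; cases "j = 0"; cases "k = 0")
         (auto simp: pd_at sh_def eval_nat_numeral algebra_simps of_nat_diff)
  qed
qed

lemma Dv_fadd: "Dv v (fadd f g) = fadd (Dv v f) (Dv v g)"
  by (rule ext) (simp add: Dv_def pd_fadd distrib_left sum.distrib)
lemma Dv_fsmult: "Dv v (fsmult c f) = fsmult c (Dv v f)"
  by (rule ext) (simp add: Dv_def pd_fsmult sum_distrib_left ac_simps)
lemma Dv_zero: "Dv v zero_form = zero_form"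
  by (rule ext) (simp add: Dv_def pd_zero)
lemma Dv_kap: "Dv v (kap c) = zero_form"
  by (rule ext) (simp add: Dv_def pd_kap)
lemma Dv_lform: "Dv v (lform w) = kap (dotp v w)"
proof (rule ext)
  fix e
  have "Dv v (lform w) e = (\<Sum>m<3. v m * kap (w m) e)"
    unfolding Dv_def by (rule sum.cong) (auto simp: pd_lform)
  then show "Dv v (lform w) e = kap (dotp v w) e" by (simp add: kap_def dotp_def)
qed

lemma Dv_fmul_lform: "Dv v (fmul g (lform w)) = fadd (fmul (Dv v g) (lform w)) (fsmult (dotp v w) g)"
proof (rule ext)
  fix e
  have "Dv v (fmul g (lform w)) e = (\<Sum>m<3. v m * (fmul (pd m g) (lform w) e + w m * g e))"
    unfolding Dv_def by (rule sum.cong) (auto simp: pd_fmul_lform)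
  also have "\<dots> = (\<Sum>m<3. v m * fmul (lform w) (pd m g) e) + dotp v w * g e"
    by (simp add: distrib_left sum.distrib dotp_def sum_distrib_right sum_distrib_left fmul_comm ac_simps)
  also have "\<dots> = fadd (fmul (Dv v g) (lform w)) (fsmult (dotp v w) g) e"
    by (simp add: fmul_comm[of _ "lform w"] Dv_def fmul_sum3)
  finally show "Dv v (fmul g (lform w)) e = fadd (fmul (Dv v g) (lform w)) (fsmult (dotp v w) g) e" .
qed

lemma Dv_comm: "Dv v (Dv w f) = Dv w (Dv v f)"
proof (rule ext)
  fix e
  have "Dv v (Dv w f) e = (\<Sum>n<3. \<Sum>m<3. v n * w m * pd n (pd m f) e)"
    by (simp add: Dv_def pd_sum3) (simp add: sum_distrib_left ac_simps)
  also have "\<dots> = (\<Sum>m<3. \<Sum>n<3. v n * w m * pd n (pd m f) e)"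
    by (rule sum.swap)
  also have "\<dots> = Dv w (Dv v f) e"
    by (simp add: Dv_def pd_sum3 sum_distrib_left ac_simps pd_comm[of _ _ f])
  finally show "Dv v (Dv w f) e = Dv w (Dv v f) e" .
qed

lemma homD: "hom d f \<Longrightarrow> f (i,j,k) \<noteq> 0 \<Longrightarrow> i+j+k = d"
  unfolding hom_def by auto
lemma hom_pd: "hom (Suc d) f \<Longrightarrow> hom d (pd m f)"
  unfolding hom_def[of d] by (auto simp: pd_at split: if_split_asm dest: homD)
lemma hom0_pd: "hom 0 f \<Longrightarrow> pd m f = zero_form"
  unfolding hom_def by (rule ext, clarify) (auto simp: pd_at)
lemma hom_fadd: "hom d f \<Longrightarrow> hom d g \<Longrightarrow> hom d (fadd f g)"
  unfolding hom_def[of d "fadd f g"] by (metis add.left_neutral fadd_at homD)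
lemma hom_fsmult: "hom d f \<Longrightarrow> hom d (fsmult c f)"
  unfolding hom_def by auto
lemma hom_sum3: "(\<And>m. m < 3 \<Longrightarrow> hom d (H m)) \<Longrightarrow> hom d (\<lambda>e. \<Sum>m<(3::nat). v m * H m e)"
  unfolding hom_def by (metis (no_types, lifting) lessThan_iff mult_zero_right sum.neutral)
lemma hom_Dv: "hom (Suc d) f \<Longrightarrow> hom d (Dv v f)"
  unfolding Dv_def by (rule hom_sum3) (rule hom_pd)
lemma hom0_Dv: "hom 0 f \<Longrightarrow> Dv v f = zero_form"
  unfolding Dv_def by (rule ext) (simp add: hom0_pd)
lemma hom_sh: "hom d g \<Longrightarrow> hom (Suc d) (sh m g)"
  unfolding hom_def[of "Suc d"] by (auto simp: sh_def split: if_split_asm dest: homD)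
lemma hom_fmul_lform: "hom d g \<Longrightarrow> hom (Suc d) (fmul g (lform v))"
  unfolding fmul_lform by (rule hom_sum3) (rule hom_sh)
lemma hom_lform: "hom 1 (lform v)"
  unfolding hom_def lform_def by auto
lemma hom0_kap: "hom 0 g \<Longrightarrow> g = kap (g (0,0,0))"
  unfolding hom_def kap_def by (rule ext, clarify) auto
lemma hom_zero: "hom d zero_form"
  unfolding hom_def by simp

lemma euler: "hom d f \<Longrightarrow> fsmult (of_nat d) f = (\<lambda>e. \<Sum>m<(3::nat). sh m (pd m f) e)"
proof (rule ext, clarify)
  fix i j k assume h: "hom d f"
  have "(\<Sum>m<(3::nat). sh m (pd m f) (i,j,k)) = (of_nat i + of_nat j + of_nat k) * f (i,j,k)"
    by (cases "i = 0"; cases "j = 0"; cases "k = 0") (auto simp: sh_def pd_at eval_nat_numeral algebra_simps)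
  also have "\<dots> = of_nat d * f (i,j,k)"
    using h unfolding hom_def by (cases "f (i,j,k) = 0") (auto simp flip: of_nat_add)
  finally show "fsmult (of_nat d) f (i,j,k) = (\<Sum>m<(3::nat). sh m (pd m f) (i,j,k))" by simp
qed

lemma decomp:
  assumes M: "\<forall>i<3. \<forall>j<3. a i * p j + b i * q j + l i * c j = (if i = j then 1 else 0)"
    and h: "hom d f"
  shows "fsmult (of_nat d) f = fadd (fadd (fmul (Dv p f) (lform a)) (fmul (Dv q f) (lform b))) (fmul (Dv c f) (lform l))"
proof (rule ext)
  fix e
  let ?X = "\<lambda>i j. sh i (pd j f) e"
  have "fadd (fadd (fmul (Dv p f) (lform a)) (fmul (Dv q f) (lform b))) (fmul (Dv c f) (lform l)) e
     = (\<Sum>i<3. \<Sum>j<3. (a i * p j + b i * q j + l i * c j) * ?X i j)"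
    by (simp add: Dv_def fmul_lform sh_sum3 sum_distrib_left distrib_right distrib_left sum.distrib ac_simps)
  also have "\<dots> = (\<Sum>i<3. \<Sum>j<3. (if i = j then ?X i j else 0))"
    using M by (intro sum.cong refl) auto
  also have "\<dots> = (\<Sum>i<(3::nat). ?X i i)" by simp
  also have "\<dots> = fsmult (of_nat d) f e" using euler[OF h] by simp
  finally show "fsmult (of_nat d) f e = fadd (fadd (fmul (Dv p f) (lform a)) (fmul (Dv q f) (lform b))) (fmul (Dv c f) (lform l)) e" by simp
qed

lemma perm12: "(\<Sum>q\<in>{p. p permutes {1,2::nat}}. g q) = g id + g (transpose 1 2)"
proof -
  have id: "{p. p permutes ({}::nat set)} = {id}" by auto
  have "(\<Sum>q\<in>{p. p permutes {1,2::nat}}. g q) = (\<Sum>b\<in>{1,2}. \<Sum>q\<in>{p. p permutes insert 2 {}}. g (transpose 1 b \<circ> q))"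
    by (subst sum_over_permutations_insert) auto
  also have "\<dots> = (\<Sum>b\<in>{1,2}. \<Sum>b'\<in>{2}. \<Sum>q\<in>{p. p permutes {}}. g (transpose 1 b \<circ> (transpose 2 b' \<circ> q)))"
    by (subst sum_over_permutations_insert) auto
  also have "\<dots> = g id + g (transpose 1 2)"
    by (simp add: id)
  finally show ?thesis .
qed

lemma perm_sum:
  fixes F :: "nat \<Rightarrow> nat \<Rightarrow> nat \<Rightarrow> complex"
  shows "(\<Sum>p\<in>perms3. of_int (sign p) * F (p 0) (p 1) (p 2)) =
     F 0 1 2 - F 0 2 1 - F 1 0 2 + F 1 2 0 + F 2 0 1 - F 2 1 0"
proof -
  have "(\<Sum>p\<in>perms3. of_int (sign p) * F (p 0) (p 1) (p 2)) = 
    (\<Sum>b\<in>{0,1,2}. \<Sum>q\<in>{p. p permutes {1,2}}. of_int (sign (transpose 0 b \<circ> q)) * F ((transpose 0 b \<circ> q) 0) ((transpose 0 b \<circ> q) 1) ((transpose 0 b \<circ> q) 2))"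
    unfolding perms3_def by (subst sum_over_permutations_insert) auto
  also have "\<dots> = (\<Sum>b\<in>{0,1,2}. of_int (sign (transpose 0 b)) * F (transpose 0 b 0) (transpose 0 b 1) (transpose 0 b 2)
      + of_int (sign (transpose 0 b \<circ> transpose 1 2)) * F (transpose 0 b 0) (transpose 0 b 2) (transpose 0 b 1))"
    by (simp only: perm12) (simp add: transpose_def)
  also have "\<dots> = F 0 1 2 - F 0 2 1 - F 1 0 2 + F 1 2 0 + F 2 0 1 - F 2 1 0"
    by (simp add: sign_compose permutation_swap_id sign_swap_id transpose_def)
  finally show ?thesis .
qed

definition cr :: "(nat \<Rightarrow> complex) \<Rightarrow> (nat \<Rightarrow> complex) \<Rightarrow> nat \<Rightarrow> complex" where
  "cr a b = (\<lambda>m. if m = 0 then a 1 * b 2 - a 2 * b 1 else if m = 1 then a 2 * b 0 - a 0 * b 2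
                 else a 0 * b 1 - a 1 * b 0)"

lemma perm_c: "(\<Sum>p\<in>perms3. of_int (sign p) * (a (p 1) * b (p 2) * F (p 0))) = (\<Sum>m<3. cr a b m * F m)"
  using perm_sum[of "\<lambda>x y z. a y * b z * F x"]
  by (simp add: cr_def eval_nat_numeral algebra_simps)

lemma perms3_lt: "p \<in> perms3 \<Longrightarrow> x < 3 \<Longrightarrow> p x < 3"
  unfolding perms3_def using permutes_in_image[of p "{0,1,2}" x] by auto
lemma perms3_lt': "p \<in> perms3 \<Longrightarrow> p 0 < 3 \<and> p 1 < 3 \<and> p 2 < 3"
  using perms3_lt by auto
lemma finite_perms3: "finite perms3"
  unfolding perms3_def by (rule finite_permutations) simp

lemma sum_lists_Suc:
  assumes "finite S"
  shows "(\<Sum>ps\<in>{ps. length ps = Suc n \<and> set ps \<subseteq> S}. G ps) =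
         (\<Sum>p\<in>S. \<Sum>ps\<in>{ps. length ps = n \<and> set ps \<subseteq> S}. G (p#ps))"
proof -
  have eq: "{ps. length ps = Suc n \<and> set ps \<subseteq> S} = (\<lambda>(p,ps). p#ps) ` (S \<times> {ps. length ps = n \<and> set ps \<subseteq> S})"
    by (auto simp: image_iff length_Suc_conv)
  have inj: "inj_on (\<lambda>(p,ps). p#ps) (S \<times> {ps. length ps = n \<and> set ps \<subseteq> S})"
    by (auto simp: inj_on_def)
  show ?thesis
    unfolding eq sum.reindex[OF inj]
    by (simp add: sum.cartesian_product split_def)
qed
lemma lists0: "{ps. length ps = 0 \<and> set ps \<subseteq> S} = {[]}" by auto
lemma sum_lists1: assumes "finite S" shows "(\<Sum>ps\<in>{ps. length ps = 1 \<and> set ps \<subseteq> S}. G ps) = (\<Sum>p\<in>S. G [p])"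
proof -
  have e: "{ps. length ps = 1 \<and> set ps \<subseteq> S} = (\<lambda>p. [p]) ` S"
    by (auto simp: length_Suc_conv One_nat_def)
  show ?thesis unfolding e by (subst sum.reindex) (auto simp: inj_on_def)
qed
lemma sum_lists2: assumes "finite S" shows "(\<Sum>ps\<in>{ps. length ps = 2 \<and> set ps \<subseteq> S}. G ps) = (\<Sum>p\<in>S. \<Sum>q\<in>S. G [p,q])"
proof -
  have e: "{ps. length ps = 2 \<and> set ps \<subseteq> S} = (\<lambda>(p,q). [p,q]) ` (S \<times> S)"
    by (auto simp: length_Suc_conv numeral_2_eq_2 image_iff)
  show ?thesis unfolding e by (subst sum.reindex) (auto simp: inj_on_def sum.cartesian_product split_def)
qed
lemma sum_lists3: assumes "finite S" shows "(\<Sum>ps\<in>{ps. length ps = 3 \<and> set ps \<subseteq> S}. G ps) = (\<Sum>p\<in>S. \<Sum>q\<in>S. \<Sum>r\<in>S. G [p,q,r])"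
proof -
  have e: "{ps. length ps = 3 \<and> set ps \<subseteq> S} = (\<lambda>(p,q,r). [p,q,r]) ` (S \<times> S \<times> S)"
    by (auto simp: length_Suc_conv numeral_3_eq_3 image_iff)
  show ?thesis unfolding e by (subst sum.reindex) (auto simp: inj_on_def sum.cartesian_product split_def)
qed

lemma fsmult_kap: "fsmult c (kap d) = kap (c * d)"
  by (rule ext) (simp add: kap_def)

abbreviation AA where "AA a \<equiv> fmul (lform a) (lform a)"
abbreviation AAA where "AAA a \<equiv> fmul (fmul (lform a) (lform a)) (lform a)"

lemma pd_AA: "n < 3 \<Longrightarrow> pd n (AA a) = fsmult (2 * a n) (lform a)"
  by (rule ext) (simp add: pd_fmul_lform pd_lform fmul_kap_left)
lemma pd_AAA: "n < 3 \<Longrightarrow> pd n (AAA a) = fsmult (3 * a n) (AA a)"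
  apply (subst pd_fmul_lform, simp)
  apply (rule ext)
  apply (simp add: pd_AA fmul_fsmult_left del: pd_fmul_lform)
  done

lemma pd2_AA: "n < 3 \<Longrightarrow> m < 3 \<Longrightarrow> pd m (pd n (AA a)) = kap (2 * a n * a m)"
  by (simp add: pd_AA pd_fsmult pd_lform fsmult_kap)
lemma pd3_AAA: "n < 3 \<Longrightarrow> m < 3 \<Longrightarrow> l < 3 \<Longrightarrow> pd l (pd m (pd n (AAA a))) = kap (6 * a n * a m * a l)"
  by (simp add: pd_AAA pd_fsmult pd2_AA fsmult_kap ac_simps)

lemma transv1: "transv 1 f (lform a) (lform b) = Dv (cr a b) f"
proof (rule ext)
  fix e
  have "transv 1 f (lform a) (lform b) e = (\<Sum>p\<in>perms3. of_int (sign p) * (a (p 1) * b (p 2) * pd (p 0) f e))"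
    unfolding transv_def sum_lists1[OF finite_perms3]
    by (rule sum.cong) (auto dest!: perms3_lt' simp: pd_lform fmul_kap_right)
  also have "\<dots> = Dv (cr a b) f e" by (rule trans[OF perm_c]) (simp add: Dv_def)
  finally show "transv 1 f (lform a) (lform b) e = Dv (cr a b) f e" .
qed

lemma transv2: "transv 2 f (AA a) (AA b) = fsmult 4 (Dv (cr a b) (Dv (cr a b) f))"
proof (rule ext)
  fix e
  have inner: "\<And>x. (\<Sum>q\<in>perms3. of_int (sign q) * (a (q 1) * b (q 2) * (4 * pd x (pd (q 0) f) e)))
      = (\<Sum>n<3. cr a b n * (4 * pd x (pd n f) e))"
    by (rule perm_c)
  have outer: "(\<Sum>p\<in>perms3. of_int (sign p) * (a (p 1) * b (p 2) * (\<Sum>n<3. cr a b n * (4 * pd (p 0) (pd n f) e))))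
      = (\<Sum>m<3. cr a b m * (\<Sum>n<3. cr a b n * (4 * pd m (pd n f) e)))"
    by (rule perm_c)
  have "transv 2 f (AA a) (AA b) e = (\<Sum>p\<in>perms3. \<Sum>q\<in>perms3. of_int (sign p) * (a (p 1) * b (p 2) *
          (of_int (sign q) * (a (q 1) * b (q 2) * (4 * pd (p 0) (pd (q 0) f) e)))))"
    unfolding transv_def sum_lists2[OF finite_perms3]
    by (intro sum.cong refl) (auto dest!: perms3_lt' simp: pd2_AA fmul_kap_right algebra_simps)
  also have "\<dots> = (\<Sum>p\<in>perms3. of_int (sign p) * (a (p 1) * b (p 2) *
          (\<Sum>q\<in>perms3. of_int (sign q) * (a (q 1) * b (q 2) * (4 * pd (p 0) (pd (q 0) f) e)))))"
    by (intro sum.cong refl) (simp only: sum_distrib_left)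
  also have "\<dots> = (\<Sum>p\<in>perms3. of_int (sign p) * (a (p 1) * b (p 2) * (\<Sum>n<3. cr a b n * (4 * pd (p 0) (pd n f) e))))"
    by (simp only: inner)
  also have "\<dots> = (\<Sum>m<3. cr a b m * (\<Sum>n<3. cr a b n * (4 * pd m (pd n f) e)))"
    by (rule outer)
  also have "\<dots> = fsmult 4 (Dv (cr a b) (Dv (cr a b) f)) e"
    by (simp add: Dv_def pd_sum3) (simp add: sum_distrib_left ac_simps)
  finally show "transv 2 f (AA a) (AA b) e = fsmult 4 (Dv (cr a b) (Dv (cr a b) f)) e" .
qed

lemma transv3: "transv 3 f (AAA a) (AAA b) = fsmult 36 (Dv (cr a b) (Dv (cr a b) (Dv (cr a b) f)))"
proof (rule ext)
  fix e
  have inner: "\<And>x y. (\<Sum>r\<in>perms3. of_int (sign r) * (a (r 1) * b (r 2) * (36 * pd x (pd y (pd (r 0) f)) e)))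
      = (\<Sum>k<3. cr a b k * (36 * pd x (pd y (pd k f)) e))"
    by (rule perm_c)
  have mid: "\<And>x. (\<Sum>q\<in>perms3. of_int (sign q) * (a (q 1) * b (q 2) * (\<Sum>k<3. cr a b k * (36 * pd x (pd (q 0) (pd k f)) e))))
      = (\<Sum>n<3. cr a b n * (\<Sum>k<3. cr a b k * (36 * pd x (pd n (pd k f)) e)))"
    by (rule perm_c)
  have outer: "(\<Sum>p\<in>perms3. of_int (sign p) * (a (p 1) * b (p 2) * (\<Sum>n<3. cr a b n * (\<Sum>k<3. cr a b k * (36 * pd (p 0) (pd n (pd k f)) e)))))
      = (\<Sum>m<3. cr a b m * (\<Sum>n<3. cr a b n * (\<Sum>k<3. cr a b k * (36 * pd m (pd n (pd k f)) e))))"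
    by (rule perm_c)
  have "transv 3 f (AAA a) (AAA b) e = (\<Sum>p\<in>perms3. \<Sum>q\<in>perms3. \<Sum>r\<in>perms3. of_int (sign p) * (a (p 1) * b (p 2) *
          (of_int (sign q) * (a (q 1) * b (q 2) * (of_int (sign r) * (a (r 1) * b (r 2) * (36 * pd (p 0) (pd (q 0) (pd (r 0) f)) e)))))))"
    unfolding transv_def sum_lists3[OF finite_perms3]
    by (intro sum.cong refl) (auto dest!: perms3_lt' simp: pd3_AAA fmul_kap_right algebra_simps)
  also have "\<dots> = (\<Sum>p\<in>perms3. of_int (sign p) * (a (p 1) * b (p 2) *
          (\<Sum>q\<in>perms3. of_int (sign q) * (a (q 1) * b (q 2) * 
           (\<Sum>r\<in>perms3. of_int (sign r) * (a (r 1) * b (r 2) * (36 * pd (p 0) (pd (q 0) (pd (r 0) f)) e)))))))"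
    by (intro sum.cong refl) (simp only: sum_distrib_left)
  also have "\<dots> = (\<Sum>m<3. cr a b m * (\<Sum>n<3. cr a b n * (\<Sum>k<3. cr a b k * (36 * pd m (pd n (pd k f)) e))))"
    by (simp only: inner mid outer)
  also have "\<dots> = fsmult 36 (Dv (cr a b) (Dv (cr a b) (Dv (cr a b) f))) e"
    by (simp add: Dv_def pd_sum3) (simp add: sum_distrib_left ac_simps)
  finally show "transv 3 f (AAA a) (AAA b) e = fsmult 36 (Dv (cr a b) (Dv (cr a b) (Dv (cr a b) f))) e" .
qed


lemma kap0: "kap 0 = zero_form" by (rule ext) (simp add: kap_def)
lemma fadd_zero_r: "fadd f zero_form = f" by (rule ext) simp
lemma fadd_zero_l: "fadd zero_form f = f" by (rule ext) simp
lemma fsmult_0: "fsmult 0 f = zero_form" by (rule ext) simp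
lemma fsmult_zero: "fsmult c zero_form = zero_form" by (rule ext) simp

lemma dot_cr_a: "dotp (cr a b) a = 0" by (simp add: dotp_def cr_def eval_nat_numeral algebra_simps)
lemma dot_cr_b: "dotp (cr a b) b = 0" by (simp add: dotp_def cr_def eval_nat_numeral algebra_simps)

lemma D_lin_a: "Dv (cr a b) (lform a) = zero_form" by (simp add: Dv_lform dot_cr_a kap0)
lemma D_lin_b: "Dv (cr a b) (lform b) = zero_form" by (simp add: Dv_lform dot_cr_b kap0)
lemma D_mul_a: "Dv (cr a b) (fmul g (lform a)) = fmul (Dv (cr a b) g) (lform a)"
  by (simp add: Dv_fmul_lform dot_cr_a fsmult_0 fadd_zero_r)
lemma D_mul_b: "Dv (cr a b) (fmul g (lform b)) = fmul (Dv (cr a b) g) (lform b)"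
  by (simp add: Dv_fmul_lform dot_cr_b fsmult_0 fadd_zero_r)

lemma swap_lin: "fmul (fmul g (lform v)) (lform w) = fmul (fmul g (lform w)) (lform v)"
  by (metis assoc_lin fmul_comm)


lemma cr_nz: assumes "lin_indep2 a b" shows "\<exists>m<3. cr a b m \<noteq> 0"
proof (rule ccontr)
  assume "\<not> ?thesis"
  then have z: "cr a b 0 = 0" "cr a b 1 = 0" "cr a b 2 = 0" by auto
  hence z': "a 1 * b 2 - a 2 * b 1 = 0" "a 2 * b 0 - a 0 * b 2 = 0" "a 0 * b 1 - a 1 * b 0 = 0" by (simp_all add: cr_def)
  have i3: "\<And>i::nat. i < 3 \<longleftrightarrow> i = 0 \<or> i = 1 \<or> i = 2" by auto
  have key: "b i * a k + (- a i) * b k = 0" if "i < 3" "k < 3" for i k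
  proof -
    have e0: "b 0 * a 1 + (- a 0) * b 1 = 0" "b 0 * a 2 + (- a 0) * b 2 = 0"
         "b 1 * a 0 + (- a 1) * b 0 = 0" "b 1 * a 2 + (- a 1) * b 2 = 0"
         "b 2 * a 0 + (- a 2) * b 0 = 0" "b 2 * a 1 + (- a 2) * b 1 = 0"
      using z' by algebra+
    from that have "i = 0 \<or> i = 1 \<or> i = 2" "k = 0 \<or> k = 1 \<or> k = 2" by auto
    then show ?thesis using e0 by (elim disjE) (simp_all only: , simp_all)
  qed
  show False
  proof (cases "a 0 = 0 \<and> a 1 = 0 \<and> a 2 = 0")
    case True
    then have h: "\<And>i. i<3 \<Longrightarrow> 1 * a i + 0 * b i = 0" unfolding i3 by auto
    from assms[unfolded lin_indep2_def, rule_format, OF h] show False by simp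
  next
    case False
    then have "0 < (3::nat) \<and> a 0 \<noteq> 0 \<or> 1 < (3::nat) \<and> a 1 \<noteq> 0 \<or> 2 < (3::nat) \<and> a 2 \<noteq> 0" by simp
    then obtain i where i: "i<3" "a i \<noteq> 0" by blast
    have h: "\<And>k. k<3 \<Longrightarrow> b i * a k + (- a i) * b k = 0"
      using i(1) key by blast
    from assms[unfolded lin_indep2_def, rule_format, OF h] i show False by simp
  qed
qed
lemma adj_id: "i<3 \<Longrightarrow> j<3 \<Longrightarrow> a i * cr b e j + b i * cr e a j + e i * cr a b j = (if i = j then dotp (cr a b) e else 0)"
proof -
  assume "i < 3" "j < 3"
  then have "i = 0 \<or> i = 1 \<or> i = 2" "j = 0 \<or> j = 1 \<or> j = 2" by auto
  then show ?thesis
    by (elim disjE) (simp_all add: cr_def dotp_def eval_nat_numeral algebra_simps)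
qed

definition basis3 where "basis3 a b p q l \<longleftrightarrow>
   (\<forall>i<3. \<forall>j<3. a i * p j + b i * q j + l i * cr a b j = (if i = j then 1 else 0))"

lemma basis_exists: assumes "lin_indep2 a b" shows "\<exists>p q l. basis3 a b p q l"
proof -
  define c where "c = cr a b"
  define e where "e = (\<lambda>m. cnj (c m))"
  define N where "N = dotp c e"
  obtain m where m: "m < 3" "c m \<noteq> 0" using cr_nz[OF assms] c_def by blast
  have "N = of_real (\<Sum>k<3. (cmod (c k))^2)"
    by (simp only: N_def dotp_def e_def of_real_sum complex_norm_square)
  moreover have "(\<Sum>k<3. (cmod (c k))^2) > 0"
    by (rule sum_pos2[of _ m]) (use m in auto)
  ultimately have N: "N \<noteq> 0" by (metis of_real_eq_0_iff order_less_irrefl)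
  have "basis3 a b (\<lambda>j. cr b e j / N) (\<lambda>j. cr e a j / N) (\<lambda>i. e i / N)"
    unfolding basis3_def
  proof (intro allI impI)
    fix i j :: nat assume ij: "i < 3" "j < 3"
    have "a i * (cr b e j / N) + b i * (cr e a j / N) + e i / N * cr a b j
        = (a i * cr b e j + b i * cr e a j + e i * cr a b j) / N"
      by (simp add: add_divide_distrib)
    also have "\<dots> = (if i = j then 1 else 0)"
      using adj_id[OF ij, of a b e] N by (simp add: N_def c_def)
    finally show "a i * (cr b e j / N) + b i * (cr e a j / N) + e i / N * cr a b j = (if i = j then 1 else 0)" .
  qed
  then show ?thesis by blast
qed


lemma fsmult_1: "fsmult 1 f = f" by (rule ext) simp

lemma basis3D: "basis3 a b p q l \<Longrightarrow> \<forall>i<3. \<forall>j<3. a i * p j + b i * q j + l i * cr a b j = (if i = j then 1 else 0)"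
  unfolding basis3_def by blast

lemma core1:
  assumes M: "basis3 a b p q l" and h: "hom 1 g" and D: "Dv (cr a b) g = zero_form"
  shows "\<exists>\<alpha> \<beta>. g = fadd (fsmult \<alpha> (lform a)) (fsmult \<beta> (lform b))"
proof -
  have E: "fsmult (of_nat 1) g = fadd (fadd (fmul (Dv p g) (lform a)) (fmul (Dv q g) (lform b))) (fmul (Dv (cr a b) g) (lform l))"
    by (rule decomp[OF basis3D[OF M] h])
  have hp: "hom 0 (Dv p g)" using hom_Dv[of 0 g p] h by simp
  have hq: "hom 0 (Dv q g)" using hom_Dv[of 0 g q] h by simp
  obtain \<alpha> where \<alpha>: "Dv p g = kap \<alpha>" using hom0_kap[OF hp] by blast
  obtain \<beta> where \<beta>: "Dv q g = kap \<beta>" using hom0_kap[OF hq] by blast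
  from E have "g = fadd (fsmult \<alpha> (lform a)) (fsmult \<beta> (lform b))"
    by (simp add: \<alpha> \<beta> D fmul_kap_left fmul_zero_left fadd_zero_r fsmult_1)
  then show ?thesis by blast
qed

lemma core2:
  assumes M: "basis3 a b p q l" and h: "hom 2 g" and D: "Dv (cr a b) g = zero_form"
  shows "\<exists>\<alpha> \<beta> \<gamma>. g = fadd (fadd (fsmult \<alpha> (fmul (lform a) (lform a))) (fsmult \<beta> (fmul (lform a) (lform b))))
                            (fsmult \<gamma> (fmul (lform b) (lform b)))"
proof -
  have E: "fsmult (of_nat 2) g = fadd (fadd (fmul (Dv p g) (lform a)) (fmul (Dv q g) (lform b))) (fmul (Dv (cr a b) g) (lform l))"
    by (rule decomp[OF basis3D[OF M] h])
  have hp: "hom 1 (Dv p g)" using hom_Dv[of 1 g p] h by (simp add: numeral_2_eq_2)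
  have hq: "hom 1 (Dv q g)" using hom_Dv[of 1 g q] h by (simp add: numeral_2_eq_2)
  have Dp: "Dv (cr a b) (Dv p g) = zero_form" by (simp add: Dv_comm[of "cr a b" p] D Dv_zero)
  have Dq: "Dv (cr a b) (Dv q g) = zero_form" by (simp add: Dv_comm[of "cr a b" q] D Dv_zero)
  obtain \<alpha>1 \<beta>1 where 1: "Dv p g = fadd (fsmult \<alpha>1 (lform a)) (fsmult \<beta>1 (lform b))" using core1[OF M hp Dp] by blast
  obtain \<alpha>2 \<beta>2 where 2: "Dv q g = fadd (fsmult \<alpha>2 (lform a)) (fsmult \<beta>2 (lform b))" using core1[OF M hq Dq] by blast
  have E2: "2 * g e = \<alpha>1 * fmul (lform a) (lform a) e + \<beta>1 * fmul (lform a) (lform b) e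
       + \<alpha>2 * fmul (lform a) (lform b) e + \<beta>2 * fmul (lform b) (lform b) e" for e
    using fun_cong[OF E, of e]
    by (simp add: 1 2 D fmul_fadd_left fmul_fsmult_left fmul_zero_left fmul_comm[of "lform b" "lform a"])
  have "g = fadd (fadd (fsmult (\<alpha>1/2) (fmul (lform a) (lform a))) (fsmult ((\<beta>1+\<alpha>2)/2) (fmul (lform a) (lform b))))
                            (fsmult (\<beta>2/2) (fmul (lform b) (lform b)))"
  proof (rule ext)
    fix e
    from E2[of e] show "g e = fadd (fadd (fsmult (\<alpha>1/2) (fmul (lform a) (lform a))) (fsmult ((\<beta>1+\<alpha>2)/2) (fmul (lform a) (lform b))))
                            (fsmult (\<beta>2/2) (fmul (lform b) (lform b))) e"
      by (simp add: field_simps)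
  qed
  then show ?thesis by blast
qed

lemma core3:
  assumes M: "basis3 a b p q l" and h: "hom 2 g" and D: "Dv (cr a b) (Dv (cr a b) g) = zero_form"
  shows "\<exists>G H. hom 1 G \<and> hom 1 H \<and> g = fadd (fmul G (lform a)) (fmul H (lform b))"
proof -
  have E: "fsmult (of_nat 2) g = fadd (fadd (fmul (Dv p g) (lform a)) (fmul (Dv q g) (lform b))) (fmul (Dv (cr a b) g) (lform l))"
    by (rule decomp[OF basis3D[OF M] h])
  have hp: "hom 1 (Dv p g)" using hom_Dv[of 1 g p] h by (simp add: numeral_2_eq_2)
  have hq: "hom 1 (Dv q g)" using hom_Dv[of 1 g q] h by (simp add: numeral_2_eq_2)
  have hc: "hom 1 (Dv (cr a b) g)" using hom_Dv[of 1 g "cr a b"] h by (simp add: numeral_2_eq_2)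
  obtain \<alpha> \<beta> where 1: "Dv (cr a b) g = fadd (fsmult \<alpha> (lform a)) (fsmult \<beta> (lform b))" using core1[OF M hc D] by blast
  define G where "G = fsmult (1/2) (fadd (Dv p g) (fsmult \<alpha> (lform l)))"
  define H where "H = fsmult (1/2) (fadd (Dv q g) (fsmult \<beta> (lform l)))"
  have hG: "hom 1 G" unfolding G_def by (intro hom_fsmult hom_fadd hp hq hom_lform)
  have hH: "hom 1 H" unfolding H_def by (intro hom_fsmult hom_fadd hp hq hom_lform)
  have E2: "2 * g e = fmul (Dv p g) (lform a) e + fmul (Dv q g) (lform b) e
       + \<alpha> * fmul (lform l) (lform a) e + \<beta> * fmul (lform l) (lform b) e" for e
    using fun_cong[OF E, of e]
    by (simp add: 1 fmul_fadd_left fmul_fsmult_left fmul_comm[of "lform a" "lform l"] fmul_comm[of "lform b" "lform l"])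
  have "g = fadd (fmul G (lform a)) (fmul H (lform b))"
  proof (rule ext)
    fix e
    from E2[of e] show "g e = fadd (fmul G (lform a)) (fmul H (lform b)) e"
      by (simp add: G_def H_def fmul_fadd_left fmul_fsmult_left field_simps) algebra
  qed
  with hG hH show ?thesis by blast
qed


lemma core4:
  assumes M: "basis3 a b p q l" and h: "hom 3 f" and D: "Dv (cr a b) f = zero_form"
  shows "\<exists>g0 h0 k0 i0. f = fadd (fadd (fadd (fsmult g0 (fmul (fmul (lform a) (lform a)) (lform a)))
                                         (fsmult h0 (fmul (fmul (lform a) (lform a)) (lform b))))
                                   (fsmult k0 (fmul (fmul (lform a) (lform b)) (lform b))))
                             (fsmult i0 (fmul (fmul (lform b) (lform b)) (lform b)))"
proof -
  have E: "fsmult (of_nat 3) f = fadd (fadd (fmul (Dv p f) (lform a)) (fmul (Dv q f) (lform b))) (fmul (Dv (cr a b) f) (lform l))"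
    by (rule decomp[OF basis3D[OF M] h])
  have hp: "hom 2 (Dv p f)" using hom_Dv[of 2 f p] h by (simp add: numeral_3_eq_3 numeral_2_eq_2)
  have hq: "hom 2 (Dv q f)" using hom_Dv[of 2 f q] h by (simp add: numeral_3_eq_3 numeral_2_eq_2)
  have Dp: "Dv (cr a b) (Dv p f) = zero_form" by (simp add: Dv_comm[of "cr a b" p] D Dv_zero)
  have Dq: "Dv (cr a b) (Dv q f) = zero_form" by (simp add: Dv_comm[of "cr a b" q] D Dv_zero)
  obtain \<alpha>1 \<beta>1 \<gamma>1 where 1: "Dv p f = fadd (fadd (fsmult \<alpha>1 (fmul (lform a) (lform a))) (fsmult \<beta>1 (fmul (lform a) (lform b))))
                            (fsmult \<gamma>1 (fmul (lform b) (lform b)))" using core2[OF M hp Dp] by blast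
  obtain \<alpha>2 \<beta>2 \<gamma>2 where 2: "Dv q f = fadd (fadd (fsmult \<alpha>2 (fmul (lform a) (lform a))) (fsmult \<beta>2 (fmul (lform a) (lform b))))
                            (fsmult \<gamma>2 (fmul (lform b) (lform b)))" using core2[OF M hq Dq] by blast
  have t1: "fmul (fmul (lform a) (lform b)) (lform a) = fmul (fmul (lform a) (lform a)) (lform b)"
    by (rule swap_lin)
  have t2: "fmul (fmul (lform b) (lform b)) (lform a) = fmul (fmul (lform a) (lform b)) (lform b)"
    by (simp add: swap_lin[of "lform b" b a] fmul_comm[of "lform b" "lform a"])
  have E2: "3 * f e = \<alpha>1 * fmul (fmul (lform a) (lform a)) (lform a) e + \<beta>1 * fmul (fmul (lform a) (lform a)) (lform b) e
       + \<gamma>1 * fmul (fmul (lform a) (lform b)) (lform b) e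
       + \<alpha>2 * fmul (fmul (lform a) (lform a)) (lform b) e + \<beta>2 * fmul (fmul (lform a) (lform b)) (lform b) e
       + \<gamma>2 * fmul (fmul (lform b) (lform b)) (lform b) e" for e
    using fun_cong[OF E, of e]
    by (simp add: 1 2 D fmul_fadd_left fmul_fsmult_left fmul_zero_left t1 t2)
  have "f = fadd (fadd (fadd (fsmult (\<alpha>1/3) (fmul (fmul (lform a) (lform a)) (lform a)))
                                         (fsmult ((\<beta>1+\<alpha>2)/3) (fmul (fmul (lform a) (lform a)) (lform b))))
                                   (fsmult ((\<gamma>1+\<beta>2)/3) (fmul (fmul (lform a) (lform b)) (lform b))))
                             (fsmult (\<gamma>2/3) (fmul (fmul (lform b) (lform b)) (lform b)))"
  proof (rule ext)
    fix e
    from E2[of e] show "f e = fadd (fadd (fadd (fsmult (\<alpha>1/3) (fmul (fmul (lform a) (lform a)) (lform a)))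
                                         (fsmult ((\<beta>1+\<alpha>2)/3) (fmul (fmul (lform a) (lform a)) (lform b))))
                                   (fsmult ((\<gamma>1+\<beta>2)/3) (fmul (fmul (lform a) (lform b)) (lform b))))
                             (fsmult (\<gamma>2/3) (fmul (fmul (lform b) (lform b)) (lform b))) e"
      by (simp add: field_simps) algebra
  qed
  then show ?thesis by blast
qed

lemma core5:
  assumes M: "basis3 a b p q l" and h: "hom 3 f" and D: "Dv (cr a b) (Dv (cr a b) f) = zero_form"
  shows "\<exists>g h k. hom 1 g \<and> hom 1 h \<and> hom 1 k \<and>
          f = fadd (fadd (fmul g (fmul (lform a) (lform a))) (fmul h (fmul (lform a) (lform b)))) (fmul k (fmul (lform b) (lform b)))"
proof -
  have E: "fsmult (of_nat 3) f = fadd (fadd (fmul (Dv p f) (lform a)) (fmul (Dv q f) (lform b))) (fmul (Dv (cr a b) f) (lform l))"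
    by (rule decomp[OF basis3D[OF M] h])
  have hp: "hom 2 (Dv p f)" using hom_Dv[of 2 f p] h by (simp add: numeral_3_eq_3 numeral_2_eq_2)
  have hq: "hom 2 (Dv q f)" using hom_Dv[of 2 f q] h by (simp add: numeral_3_eq_3 numeral_2_eq_2)
  have hc: "hom 2 (Dv (cr a b) f)" using hom_Dv[of 2 f "cr a b"] h by (simp add: numeral_3_eq_3 numeral_2_eq_2)
  have Dp: "Dv (cr a b) (Dv (cr a b) (Dv p f)) = zero_form"
    by (simp add: Dv_comm[of "cr a b" p] D Dv_zero)
  have Dq: "Dv (cr a b) (Dv (cr a b) (Dv q f)) = zero_form"
    by (simp add: Dv_comm[of "cr a b" q] D Dv_zero)
  obtain g0 h0 k0 where 0: "Dv (cr a b) f = fadd (fadd (fsmult g0 (fmul (lform a) (lform a))) (fsmult h0 (fmul (lform a) (lform b))))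
                            (fsmult k0 (fmul (lform b) (lform b)))" using core2[OF M hc D] by blast
  obtain G1 H1 where 1: "hom 1 G1" "hom 1 H1" "Dv p f = fadd (fmul G1 (lform a)) (fmul H1 (lform b))"
    using core3[OF M hp Dp] by blast
  obtain G2 H2 where 2: "hom 1 G2" "hom 1 H2" "Dv q f = fadd (fmul G2 (lform a)) (fmul H2 (lform b))"
    using core3[OF M hq Dq] by blast
  define g where "g = fsmult (1/3) (fadd G1 (fsmult g0 (lform l)))"
  define h where "h = fsmult (1/3) (fadd (fadd H1 G2) (fsmult h0 (lform l)))"
  define k where "k = fsmult (1/3) (fadd H2 (fsmult k0 (lform l)))"
  have hg: "hom 1 g" unfolding g_def by (intro hom_fsmult hom_fadd 1 2 hom_lform)
  have hh: "hom 1 h" unfolding h_def by (intro hom_fsmult hom_fadd 1 2 hom_lform)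
  have hk: "hom 1 k" unfolding k_def by (intro hom_fsmult hom_fadd 1 2 hom_lform)
  have t1: "fmul (fmul H1 (lform b)) (lform a) = fmul (fmul H1 (lform a)) (lform b)" by (rule swap_lin)
  have t2: "fmul (fmul (lform a) (lform a)) (lform l) = fmul (fmul (lform l) (lform a)) (lform a)"
    by (simp add: swap_lin[of "lform a" a l] fmul_comm[of "lform a" "lform l"])
  have t3: "fmul (fmul (lform a) (lform b)) (lform l) = fmul (fmul (lform l) (lform a)) (lform b)"
    by (simp add: swap_lin[of "lform a" b l] fmul_comm[of "lform a" "lform l"])
  have t4: "fmul (fmul (lform b) (lform b)) (lform l) = fmul (fmul (lform l) (lform b)) (lform b)"
    by (simp add: swap_lin[of "lform b" b l] fmul_comm[of "lform b" "lform l"])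
  have E2: "3 * f e = fmul (fmul G1 (lform a)) (lform a) e + fmul (fmul H1 (lform a)) (lform b) e
       + fmul (fmul G2 (lform a)) (lform b) e + fmul (fmul H2 (lform b)) (lform b) e
       + g0 * fmul (fmul (lform l) (lform a)) (lform a) e + h0 * fmul (fmul (lform l) (lform a)) (lform b) e
       + k0 * fmul (fmul (lform l) (lform b)) (lform b) e" for e
    using fun_cong[OF E, of e]
    by (simp add: 0 1 2 fmul_fadd_left fmul_fsmult_left t1 t2 t3 t4)
  have "f = fadd (fadd (fmul g (fmul (lform a) (lform a))) (fmul h (fmul (lform a) (lform b)))) (fmul k (fmul (lform b) (lform b)))"
  proof (rule ext)
    fix e
    from E2[of e] show "f e = fadd (fadd (fmul g (fmul (lform a) (lform a))) (fmul h (fmul (lform a) (lform b)))) (fmul k (fmul (lform b) (lform b))) e"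
      by (simp add: g_def h_def k_def fmul_fadd_left fmul_fsmult_left assoc_lin field_simps) algebra
  qed
  with hg hh hk show ?thesis by blast
qed

lemma core6:
  assumes M: "basis3 a b p q l" and h: "hom 3 f" and D: "Dv (cr a b) (Dv (cr a b) (Dv (cr a b) f)) = zero_form"
  shows "\<exists>G H. hom 2 G \<and> hom 2 H \<and> f = fadd (fmul G (lform a)) (fmul H (lform b))"
proof -
  have E: "fsmult (of_nat 3) f = fadd (fadd (fmul (Dv p f) (lform a)) (fmul (Dv q f) (lform b))) (fmul (Dv (cr a b) f) (lform l))"
    by (rule decomp[OF basis3D[OF M] h])
  have hp: "hom 2 (Dv p f)" using hom_Dv[of 2 f p] h by (simp add: numeral_3_eq_3 numeral_2_eq_2)
  have hq: "hom 2 (Dv q f)" using hom_Dv[of 2 f q] h by (simp add: numeral_3_eq_3 numeral_2_eq_2)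
  have hc: "hom 2 (Dv (cr a b) f)" using hom_Dv[of 2 f "cr a b"] h by (simp add: numeral_3_eq_3 numeral_2_eq_2)
  obtain g h where gh: "hom 1 g" "hom 1 h" "Dv (cr a b) f = fadd (fmul g (lform a)) (fmul h (lform b))"
    using core3[OF M hc D] by blast
  define G where "G = fsmult (1/3) (fadd (Dv p f) (fmul g (lform l)))"
  define H where "H = fsmult (1/3) (fadd (Dv q f) (fmul h (lform l)))"
  have hgl: "hom 2 (fmul g (lform l))" using hom_fmul_lform[OF gh(1)] by (simp add: numeral_2_eq_2)
  have hhl: "hom 2 (fmul h (lform l))" using hom_fmul_lform[OF gh(2)] by (simp add: numeral_2_eq_2)
  have hG: "hom 2 G" unfolding G_def by (intro hom_fsmult hom_fadd hp hgl)
  have hH: "hom 2 H" unfolding H_def by (intro hom_fsmult hom_fadd hq hhl)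
  have E2: "3 * f e = fmul (Dv p f) (lform a) e + fmul (Dv q f) (lform b) e
       + fmul (fmul g (lform l)) (lform a) e + fmul (fmul h (lform l)) (lform b) e" for e
    using fun_cong[OF E, of e]
    by (simp add: gh fmul_fadd_left swap_lin[of g a l] swap_lin[of h b l])
  have "f = fadd (fmul G (lform a)) (fmul H (lform b))"
  proof (rule ext)
    fix e
    from E2[of e] show "f e = fadd (fmul G (lform a)) (fmul H (lform b)) e"
      by (simp add: G_def H_def fmul_fadd_left fmul_fsmult_left field_simps) algebra
  qed
  with hG hH show ?thesis by blast
qed


lemma fsmult_eq_zero: "c \<noteq> 0 \<Longrightarrow> (fsmult c X = zero_form) = (X = zero_form)"
  by (auto simp: fun_eq_iff)

lemma D2_hom1: "hom 1 g \<Longrightarrow> Dv v (Dv v g) = zero_form"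
  using hom_Dv[of 0 g v] by (simp add: hom0_Dv)
lemma D3_hom2: "hom 2 g \<Longrightarrow> Dv v (Dv v (Dv v g)) = zero_form"
  using hom_Dv[of 1 g v] by (simp add: numeral_2_eq_2 D2_hom1)

theorem lemma5p1:
  fixes a b :: "nat \<Rightarrow> complex"
  assumes "lin_indep2 a b"
  defines "A \<equiv> lform a" and "B \<equiv> lform b"
  shows
   "(\<forall>f. hom 1 f \<longrightarrow>
      (transv 1 f A B = zero_form \<longleftrightarrow>
       (\<exists>g0 h0. f = fadd (fsmult g0 A) (fsmult h0 B))))
  \<and> (\<forall>f. hom 2 f \<longrightarrow>
      (transv 1 f A B = zero_form \<longleftrightarrow>
       (\<exists>g0 h0 k0. f = fadd (fadd (fsmult g0 (fmul A A)) (fsmult h0 (fmul A B)))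
                            (fsmult k0 (fmul B B)))))
  \<and> (\<forall>f. hom 2 f \<longrightarrow>
      (transv 2 f (fmul A A) (fmul B B) = zero_form \<longleftrightarrow>
       (\<exists>g h. hom 1 g \<and> hom 1 h \<and> f = fadd (fmul g A) (fmul h B))))
  \<and> (\<forall>f. hom 3 f \<longrightarrow>
      (transv 1 f A B = zero_form \<longleftrightarrow>
       (\<exists>g0 h0 k0 i0. f = fadd (fadd (fadd (fsmult g0 (fmul (fmul A A) A))
                                         (fsmult h0 (fmul (fmul A A) B)))
                                   (fsmult k0 (fmul (fmul A B) B)))
                             (fsmult i0 (fmul (fmul B B) B)))))
  \<and> (\<forall>f. hom 3 f \<longrightarrow>
      (transv 2 f (fmul A A) (fmul B B) = zero_form \<longleftrightarrow>
       (\<exists>g h k. hom 1 g \<and> hom 1 h \<and> hom 1 k \<and>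
          f = fadd (fadd (fmul g (fmul A A)) (fmul h (fmul A B))) (fmul k (fmul B B)))))
  \<and> (\<forall>f. hom 3 f \<longrightarrow>
      (transv 3 f (fmul (fmul A A) A) (fmul (fmul B B) B) = zero_form \<longleftrightarrow>
       (\<exists>g h. hom 2 g \<and> hom 2 h \<and> f = fadd (fmul g A) (fmul h B))))"
proof -
  obtain p q l where M: "basis3 a b p q l" using basis_exists[OF assms(1)] by blast
  show ?thesis unfolding A_def B_def
  proof (intro conjI allI impI)
    fix f :: form assume h: "hom 1 f"
    show "transv 1 f (lform a) (lform b) = zero_form \<longleftrightarrow>
       (\<exists>g0 h0. f = fadd (fsmult g0 (lform a)) (fsmult h0 (lform b)))"
      unfolding transv1
      using core1[OF M h]
      by (auto simp: Dv_fadd Dv_fsmult D_lin_a D_lin_b fsmult_zero fadd_zero_r)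
  next
    fix f :: form assume h: "hom 2 f"
    show "transv 1 f (lform a) (lform b) = zero_form \<longleftrightarrow>
       (\<exists>g0 h0 k0. f = fadd (fadd (fsmult g0 (fmul (lform a) (lform a))) (fsmult h0 (fmul (lform a) (lform b))))
                            (fsmult k0 (fmul (lform b) (lform b))))"
      unfolding transv1
      using core2[OF M h]
      by (auto simp: Dv_fadd Dv_fsmult D_lin_a D_lin_b D_mul_a D_mul_b fmul_zero_left fsmult_zero fadd_zero_r)
  next
    fix f :: form assume h: "hom 2 f"
    show "transv 2 f (fmul (lform a) (lform a)) (fmul (lform b) (lform b)) = zero_form \<longleftrightarrow>
       (\<exists>g h. hom 1 g \<and> hom 1 h \<and> f = fadd (fmul g (lform a)) (fmul h (lform b)))"
      unfolding transv2 fsmult_eq_zero[of 4, simplified]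
      using core3[OF M h]
      by (auto simp: Dv_fadd D_mul_a D_mul_b D2_hom1 fmul_zero_left fadd_zero_r)
  next
    fix f :: form assume h: "hom 3 f"
    show "transv 1 f (lform a) (lform b) = zero_form \<longleftrightarrow>
       (\<exists>g0 h0 k0 i0. f = fadd (fadd (fadd (fsmult g0 (fmul (fmul (lform a) (lform a)) (lform a)))
                                         (fsmult h0 (fmul (fmul (lform a) (lform a)) (lform b))))
                                   (fsmult k0 (fmul (fmul (lform a) (lform b)) (lform b))))
                             (fsmult i0 (fmul (fmul (lform b) (lform b)) (lform b))))"
      unfolding transv1
      using core4[OF M h]
      by (auto simp: Dv_fadd Dv_fsmult D_lin_a D_lin_b D_mul_a D_mul_b fmul_zero_left fsmult_zero fadd_zero_r)
  next
    fix f :: form assume h: "hom 3 f"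
    show "transv 2 f (fmul (lform a) (lform a)) (fmul (lform b) (lform b)) = zero_form \<longleftrightarrow>
       (\<exists>g h k. hom 1 g \<and> hom 1 h \<and> hom 1 k \<and>
          f = fadd (fadd (fmul g (fmul (lform a) (lform a))) (fmul h (fmul (lform a) (lform b)))) (fmul k (fmul (lform b) (lform b))))"
      unfolding transv2 fsmult_eq_zero[of 4, simplified]
      using core5[OF M h]
      by (auto simp: assoc_lin Dv_fadd D_mul_a D_mul_b D2_hom1 fmul_zero_left fadd_zero_r)
  next
    fix f :: form assume h: "hom 3 f"
    show "transv 3 f (fmul (fmul (lform a) (lform a)) (lform a)) (fmul (fmul (lform b) (lform b)) (lform b)) = zero_form \<longleftrightarrow>
       (\<exists>g h. hom 2 g \<and> hom 2 h \<and> f = fadd (fmul g (lform a)) (fmul h (lform b)))"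
      unfolding transv3 fsmult_eq_zero[of 36, simplified]
      using core6[OF M h]
      by (auto simp: Dv_fadd D_mul_a D_mul_b D3_hom2 fmul_zero_left fadd_zero_r)
  qed
qed

end
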